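(* Let $A,B$ be $P$-operators on the same probability space $\Omega$. Then $d_M(A,B)\le 3\|A-B\|_{\infty\to1}^{1/2}$.
   Context: A $P$-operator on a probability space $\Omega$ is a linear $A:L^\infty(\Omega)\to L^1(\Omega)$, $v\mapsto vA$, with $\|A\|_{\infty\to1}:=\sup_v\|vA\|_1/\|v\|_\infty<\infty$. $\mathcal{S}_k(A)$ is the set of joint distributions on $\mathbb{R}^{2k}$ of $(v_1,\dots,v_k,v_1A,\dots,v_kA)$ over measurable $v_i:\Omega\to[-1,1]$. $d_{\rm LP}(\eta_1,\eta_2)=\inf\{\varepsilon>0:\eta_1(U)\le\eta_2(U^\varepsilon)+\varepsilon,\ \eta_2(U)\le\eta_1(U^\varepsilon)+\varepsilon\text{ for all Borel }U\}$ ($U^\varepsilon$ the open $\varepsilon$-neighborhood), $d_H$ the corresponding Hausdorff distance between sets of measures, and $d_M(A,B)=\sum_{k\ge1}2^{-k}d_H(\mathcal{S}_k(A),\mathcal{S}_k(B))$. *)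

theory Defs
  imports "HOL-Probability.Probability" "HOL-Probability.Essential_Supremum"
begin

definition Linf_norm :: "'a measure \<Rightarrow> ('a \<Rightarrow> real) \<Rightarrow> real" where
  "Linf_norm M v = real_of_ereal (esssup M (\<lambda>x. ereal \<bar>v x\<bar>))"

definition L1_norm :: "'a measure \<Rightarrow> ('a \<Rightarrow> real) \<Rightarrow> real" where
  "L1_norm M f = (\<integral>x. \<bar>f x\<bar> \<partial>M)"

definition is_Linf :: "'a measure \<Rightarrow> ('a \<Rightarrow> real) \<Rightarrow> bool" where
  "is_Linf M v \<longleftrightarrow> v \<in> borel_measurable M \<and> esssup M (\<lambda>x. ereal \<bar>v x\<bar>) < \<infinity>"

text \<open>The operator is written as a function
  applied to representatives; A v stands for vA.\<close>

definition P_operator :: "'a measure \<Rightarrow> (('a \<Rightarrow> real) \<Rightarrow> ('a \<Rightarrow> real)) \<Rightarrow> bool" where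
  "P_operator M A \<longleftrightarrow>
     (\<forall>v. is_Linf M v \<longrightarrow> integrable M (A v)) \<and>
     (\<forall>v w. is_Linf M v \<and> is_Linf M w \<and> (AE x in M. v x = w x) \<longrightarrow> (AE x in M. A v x = A w x)) \<and>
     (\<forall>v w a b. is_Linf M v \<and> is_Linf M w \<longrightarrow>
        (AE x in M. A (\<lambda>y. a * v y + b * w y) x = a * A v x + b * A w x)) \<and>
     (\<exists>C. \<forall>v. is_Linf M v \<longrightarrow> L1_norm M (A v) \<le> C * Linf_norm M v)"

definition op_norm :: "'a measure \<Rightarrow> (('a \<Rightarrow> real) \<Rightarrow> ('a \<Rightarrow> real)) \<Rightarrow> real" where
  "op_norm M A = (SUP v \<in> {v. is_Linf M v \<and> Linf_norm M v \<noteq> 0}. L1_norm M (A v) / Linf_norm M v)"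

text \<open>R^(2k) is represented by the finite product space on coordinates {..<2k}.\<close>

definition Rspace :: "nat \<Rightarrow> (nat \<Rightarrow> real) measure" where
  "Rspace n = PiM {..<n} (\<lambda>_. borel)"

definition edist :: "nat \<Rightarrow> (nat \<Rightarrow> real) \<Rightarrow> (nat \<Rightarrow> real) \<Rightarrow> real" where
  "edist n x y = sqrt (\<Sum>i<n. (x i - y i)\<^sup>2)"

definition nbhd :: "nat \<Rightarrow> (nat \<Rightarrow> real) set \<Rightarrow> real \<Rightarrow> (nat \<Rightarrow> real) set" where
  "nbhd n U e = {y \<in> space (Rspace n). \<exists>x\<in>U. edist n x y < e}"

definition d_LP :: "nat \<Rightarrow> (nat \<Rightarrow> real) measure \<Rightarrow> (nat \<Rightarrow> real) measure \<Rightarrow> real" where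
  "d_LP n \<eta>1 \<eta>2 = Inf {e. e > 0 \<and> (\<forall>U \<in> sets (Rspace n).
      measure \<eta>1 U \<le> measure \<eta>2 (nbhd n U e) + e \<and>
      measure \<eta>2 U \<le> measure \<eta>1 (nbhd n U e) + e)}"

definition d_H :: "nat \<Rightarrow> (nat \<Rightarrow> real) measure set \<Rightarrow> (nat \<Rightarrow> real) measure set \<Rightarrow> real" where
  "d_H n X Y = max (SUP x\<in>X. INF y\<in>Y. d_LP n x y) (SUP y\<in>Y. INF x\<in>X. d_LP n x y)"

text \<open>S_k(A): joint distributions of (v_1,...,v_k, v_1 A, ..., v_k A), coordinates 0..2k-1.\<close>

definition S_k :: "'a measure \<Rightarrow> nat \<Rightarrow> (('a \<Rightarrow> real) \<Rightarrow> ('a \<Rightarrow> real)) \<Rightarrow> (nat \<Rightarrow> real) measure set" where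
  "S_k M k A = {distr M (Rspace (2*k))
        (\<lambda>x. \<lambda>i\<in>{..<2*k}. if i < k then v i x else A (v (i - k)) x) | v.
        \<forall>i<k. v i \<in> borel_measurable M \<and> (\<forall>x\<in>space M. \<bar>v i x\<bar> \<le> 1)}"

definition d_M :: "'a measure \<Rightarrow> (('a \<Rightarrow> real) \<Rightarrow> ('a \<Rightarrow> real)) \<Rightarrow> (('a \<Rightarrow> real) \<Rightarrow> ('a \<Rightarrow> real)) \<Rightarrow> real" where
  "d_M M A B = (\<Sum>k. (1/2) ^ (Suc k) * d_H (2 * Suc k) (S_k M (Suc k) A) (S_k M (Suc k) B))"

end

theory Submission imports Defs begin

lemma edist_sym: "edist n x y = edist n y x"
  unfolding edist_def by (simp add: power2_commute)

lemma edist_cont: "continuous_on UNIV (\<lambda>z. edist n x z)"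
  unfolding edist_def by (intro continuous_intros; simp)

lemma nbhd_sets: "nbhd n U e \<in> sets (Rspace n)"
proof -
  define OS where "OS = (\<Union>x\<in>U. {z. edist n x z < e})"
  have "open OS" unfolding OS_def
    by (intro open_UN ballI open_Collect_less edist_cont continuous_intros)
  hence "OS \<in> sets borel" by simp
  have m: "(\<lambda>y::nat\<Rightarrow>real. y) \<in> borel_measurable (Rspace n)"
  proof (rule measurable_coordinatewise_then_product)
    fix i :: nat
    show "(\<lambda>y. y i) \<in> borel_measurable (Rspace n)"
    proof (cases "i < n")
      case True thus ?thesis unfolding Rspace_def by (intro measurable_component_singleton) auto
    next
      case False
      have "(\<lambda>y::nat\<Rightarrow>real. undefined::real) \<in> borel_measurable (Rspace n)" by simp
      moreover have "\<And>y. y \<in> space (Rspace n) \<Longrightarrow> undefined = y i"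
        using False unfolding Rspace_def by (auto simp: space_PiM PiE_def extensional_def)
      ultimately show ?thesis by (rule measurable_cong[THEN iffD1, rotated])
    qed
  qed
  have "nbhd n U e = (\<lambda>y. y) -` OS \<inter> space (Rspace n)"
    unfolding nbhd_def OS_def by auto
  thus ?thesis using measurable_sets[OF m \<open>OS \<in> sets borel\<close>] by simp
qed
lemma lp_one_dir:
  assumes P: "prob_space M" and X: "X \<in> measurable M (Rspace n)" and Y: "Y \<in> measurable M (Rspace n)"
   and D: "integrable M D" and DX: "\<forall>x\<in>space M. edist n (X x) (Y x) \<le> D x"
   and D0: "\<forall>x\<in>space M. 0 \<le> D x"
   and Dc: "integral\<^sup>L M D \<le> c" and e: "0 < e" "c \<le> e*e" and U: "U \<in> sets (Rspace n)"
  shows "measure (distr M (Rspace n) X) U \<le> measure (distr M (Rspace n) Y) (nbhd n U e) + e"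
proof -
  interpret prob_space M by (rule P)
  have N: "nbhd n U e \<in> sets (Rspace n)" by (rule nbhd_sets)
  have Dm: "D \<in> borel_measurable M" using D by auto
  have s1: "X -` U \<inter> space M \<in> sets M" using X U by measurable
  have s2: "Y -` nbhd n U e \<inter> space M \<in> sets M" using Y N by measurable
  have s3: "{x\<in>space M. e \<le> D x} \<in> sets M" using Dm by measurable
  have sub: "X -` U \<inter> space M \<subseteq> (Y -` nbhd n U e \<inter> space M) \<union> {x\<in>space M. e \<le> D x}"
  proof
    fix x assume x: "x \<in> X -` U \<inter> space M"
    show "x \<in> (Y -` nbhd n U e \<inter> space M) \<union> {x\<in>space M. e \<le> D x}"
    proof (cases "e \<le> D x")
      case False
      hence "edist n (X x) (Y x) < e" using DX x by force
      moreover have "Y x \<in> space (Rspace n)" using x by (intro measurable_space[OF Y]) auto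
      ultimately show ?thesis using x unfolding nbhd_def by auto
    qed (use x in auto)
  qed
  have "measure (distr M (Rspace n) X) U = measure M (X -` U \<inter> space M)"
    using X U by (simp add: measure_distr)
  also have "\<dots> \<le> measure M ((Y -` nbhd n U e \<inter> space M) \<union> {x\<in>space M. e \<le> D x})"
    using sub s2 s3 by (intro finite_measure_mono) auto
  also have "\<dots> \<le> measure M (Y -` nbhd n U e \<inter> space M) + measure M {x\<in>space M. e \<le> D x}"
    using s2 s3 by (intro measure_Un_le) auto
  also have "measure M {x\<in>space M. e \<le> D x} \<le> integral\<^sup>L M D / e"
    using D D0 e by (intro integral_Markov_inequality_measure[where A="space M"]) auto
  also have "integral\<^sup>L M D / e \<le> e"
    using Dc e by (simp add: divide_le_eq)
  also have "measure M (Y -` nbhd n U e \<inter> space M) = measure (distr M (Rspace n) Y) (nbhd n U e)"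
    using Y N by (simp add: measure_distr)
  finally show ?thesis by simp
qed

lemma esssup_abs_nonneg:
  assumes "prob_space M" "v \<in> borel_measurable M"
  shows "0 \<le> esssup M (\<lambda>x. ereal \<bar>v x\<bar>)"
proof -
  interpret prob_space M by fact
  have "esssup M (\<lambda>x. ereal 0) = ereal 0" by (intro esssup_const) (simp add: emeasure_space_1)
  moreover have "esssup M (\<lambda>x. ereal 0) \<le> esssup M (\<lambda>x. ereal \<bar>v x\<bar>)"
    by (intro esssup_mono) auto
  ultimately show ?thesis by (simp add: zero_ereal_def)
qed

lemma Linf_nonneg:
  assumes "prob_space M" "is_Linf M v"
  shows "0 \<le> Linf_norm M v"
  using esssup_abs_nonneg[OF assms(1)] assms(2) unfolding Linf_norm_def is_Linf_def
  by (simp add: real_of_ereal_pos)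

lemma L1_nonneg: "0 \<le> L1_norm M f"
  unfolding L1_norm_def by simp

lemma const_one_Linf:
  assumes "prob_space M"
  shows "is_Linf M (\<lambda>x. 1)" "Linf_norm M (\<lambda>x. 1) = 1"
proof -
  interpret prob_space M by fact
  have "esssup M (\<lambda>x. ereal 1) = ereal 1" by (intro esssup_const) (simp add: emeasure_space_1)
  thus "is_Linf M (\<lambda>x. 1)" "Linf_norm M (\<lambda>x. 1) = 1"
    unfolding is_Linf_def Linf_norm_def by auto
qed

lemma op_norm_facts:
  assumes P: "prob_space M" and A: "P_operator M A" and B: "P_operator M B"
  defines "S \<equiv> {v. is_Linf M v \<and> Linf_norm M v \<noteq> 0}"
  defines "f \<equiv> (\<lambda>v. L1_norm M (\<lambda>x. A v x - B v x) / Linf_norm M v)"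
  shows "bdd_above (f ` S)" "0 \<le> op_norm M (\<lambda>v x. A v x - B v x)"
proof -
  obtain CA where CA: "\<forall>v. is_Linf M v \<longrightarrow> L1_norm M (A v) \<le> CA * Linf_norm M v"
    and IA: "\<forall>v. is_Linf M v \<longrightarrow> integrable M (A v)"
    using A unfolding P_operator_def by blast
  obtain CB where CB: "\<forall>v. is_Linf M v \<longrightarrow> L1_norm M (B v) \<le> CB * Linf_norm M v"
    and IB: "\<forall>v. is_Linf M v \<longrightarrow> integrable M (B v)"
    using B unfolding P_operator_def by blast
  show bdd: "bdd_above (f ` S)"
  proof (rule bdd_aboveI2)
    fix v assume "v \<in> S"
    hence v: "is_Linf M v" "Linf_norm M v \<noteq> 0" unfolding S_def by auto
    have L: "0 < Linf_norm M v" using Linf_nonneg[OF P v(1)] v(2) by linarith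
    have "L1_norm M (\<lambda>x. A v x - B v x) \<le> L1_norm M (A v) + L1_norm M (B v)"
    proof -
      have iA: "integrable M (A v)" and iB: "integrable M (B v)" using IA IB v(1) by auto
      have "(LINT x|M. \<bar>A v x - B v x\<bar>) \<le> (LINT x|M. \<bar>A v x\<bar> + \<bar>B v x\<bar>)"
        using iA iB by (intro integral_mono) auto
      also have "\<dots> = (LINT x|M. \<bar>A v x\<bar>) + (LINT x|M. \<bar>B v x\<bar>)"
        using iA iB by (rule Bochner_Integration.integral_add[OF integrable_abs integrable_abs])
      finally show ?thesis unfolding L1_norm_def .
    qed
    also have "\<dots> \<le> (\<bar>CA\<bar> + \<bar>CB\<bar>) * Linf_norm M v"
    proof -
      have a: "L1_norm M (A v) \<le> CA * Linf_norm M v" "L1_norm M (B v) \<le> CB * Linf_norm M v"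
        using CA CB v(1) by auto
      have b: "CA * Linf_norm M v \<le> \<bar>CA\<bar> * Linf_norm M v" "CB * Linf_norm M v \<le> \<bar>CB\<bar> * Linf_norm M v"
        using L by (auto intro!: mult_right_mono)
      show ?thesis using a b by (simp add: distrib_right)
    qed
    finally show "f v \<le> \<bar>CA\<bar> + \<bar>CB\<bar>" unfolding f_def using L by (simp add: divide_le_eq)
  qed
  have "(\<lambda>x. 1) \<in> S" using const_one_Linf[OF P] unfolding S_def by auto
  hence "f (\<lambda>x. 1) \<le> Sup (f ` S)" using bdd by (intro cSUP_upper) auto
  moreover have "0 \<le> f (\<lambda>x. 1)" unfolding f_def using L1_nonneg const_one_Linf[OF P] by simp
  ultimately show "0 \<le> op_norm M (\<lambda>v x. A v x - B v x)"
    unfolding op_norm_def S_def f_def by simp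
qed

lemma op_norm_bound:
  assumes P: "prob_space M" and A: "P_operator M A" and B: "P_operator M B"
    and vm: "v \<in> borel_measurable M" and v1: "\<forall>x\<in>space M. \<bar>v x\<bar> \<le> 1"
  shows "L1_norm M (\<lambda>x. A v x - B v x) \<le> op_norm M (\<lambda>v x. A v x - B v x)"
proof -
  interpret prob_space M by fact
  have e1: "esssup M (\<lambda>x. ereal \<bar>v x\<bar>) \<le> 1"
    using vm v1 by (intro esssup_I) (auto intro!: AE_I2)
  have e0: "0 \<le> esssup M (\<lambda>x. ereal \<bar>v x\<bar>)" by (rule esssup_abs_nonneg[OF P vm])
  have vL: "is_Linf M v" unfolding is_Linf_def using vm e1
    using order.strict_trans1[OF e1, of "\<infinity>"] by simp
  obtain r where r: "esssup M (\<lambda>x. ereal \<bar>v x\<bar>) = ereal r"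
    using e0 e1 by (cases "esssup M (\<lambda>x. ereal \<bar>v x\<bar>)") auto
  have L01: "0 \<le> Linf_norm M v" "Linf_norm M v \<le> 1" "Linf_norm M v = r"
    unfolding Linf_norm_def using e0 e1 r by auto
  have on: "0 \<le> op_norm M (\<lambda>v x. A v x - B v x)" by (rule op_norm_facts[OF P A B])
  show ?thesis
  proof (cases "Linf_norm M v = 0")
    case False
    hence pos: "0 < Linf_norm M v" using L01 by linarith
    have "L1_norm M (\<lambda>x. A v x - B v x) / Linf_norm M v \<le> op_norm M (\<lambda>v x. A v x - B v x)"
      unfolding op_norm_def using op_norm_facts(1)[OF P A B] vL False
      by (intro cSUP_upper) auto
    hence "L1_norm M (\<lambda>x. A v x - B v x) \<le> op_norm M (\<lambda>v x. A v x - B v x) * Linf_norm M v"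
      using pos by (simp add: divide_le_eq)
    also have "\<dots> \<le> op_norm M (\<lambda>v x. A v x - B v x)"
      using on L01 by (simp add: mult_left_le)
    finally show ?thesis .
  next
    case True
    have "esssup M (\<lambda>x. ereal \<bar>v x\<bar>) = 0"
      using True r L01 by (simp add: zero_ereal_def)
    hence "AE x in M. ereal \<bar>v x\<bar> \<le> 0" using esssup_AE[of "\<lambda>x. ereal \<bar>v x\<bar>" M] by simp
    hence v0: "AE x in M. v x = 0" by eventually_elim simp
    have zL: "is_Linf M (\<lambda>x. 0)" unfolding is_Linf_def
      using esssup_const[of M "ereal 0"] by (simp add: zero_ereal_def emeasure_space_1)
    have z: "AE x in M. C v x = 0" if C: "P_operator M C" for C
    proof -
      have "AE x in M. C v x = C (\<lambda>x. 0) x" using C vL zL v0 unfolding P_operator_def by blast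
      moreover have "AE x in M. C (\<lambda>y. 0 * (0::real) + 0 * 0) x = 0 * C (\<lambda>x. 0) x + 0 * C (\<lambda>x. 0) x"
        using C zL unfolding P_operator_def by blast
      ultimately show ?thesis by eventually_elim simp
    qed
    have "AE x in M. \<bar>A v x - B v x\<bar> = 0" using z[OF A] z[OF B] by eventually_elim simp
    hence "L1_norm M (\<lambda>x. A v x - B v x) = 0" unfolding L1_norm_def
      by (rule integral_eq_zero_AE)
    thus ?thesis using on by simp
  qed
qed


lemma sum_split_add: fixes g :: "nat \<Rightarrow> 'b::comm_monoid_add" and k m :: nat
  shows "(\<Sum>i<k+m. g i) = (\<Sum>i<k. g i) + (\<Sum>j<m. g (k+j))"
  by (induction m) (auto simp: add_ac)

lemma bounded_is_Linf:
  assumes P: "prob_space M" and vm: "v \<in> borel_measurable M" and v1: "\<forall>x\<in>space M. \<bar>v x\<bar> \<le> 1"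
  shows "is_Linf M v"
proof -
  interpret prob_space M by fact
  have e1: "esssup M (\<lambda>x. ereal \<bar>v x\<bar>) \<le> 1"
    using vm v1 by (intro esssup_I) (auto intro!: AE_I2)
  show ?thesis unfolding is_Linf_def using vm e1
    using order.strict_trans1[OF e1, of "\<infinity>"] by simp
qed

lemma XX_meas:
  assumes P: "prob_space M" and C: "P_operator M C"
    and v: "\<forall>i<k. v i \<in> borel_measurable M \<and> (\<forall>x\<in>space M. \<bar>v i x\<bar> \<le> 1)"
  shows "(\<lambda>x. \<lambda>i\<in>{..<2*k}. if i < k then v i x else C (v (i - k)) x) \<in> measurable M (Rspace (2*k))"
  unfolding Rspace_def
proof (rule measurable_restrict)
  fix i assume i: "i \<in> {..<2*k}"
  show "(\<lambda>x. if i < k then v i x else C (v (i - k)) x) \<in> borel_measurable M"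
  proof (cases "i < k")
    case True thus ?thesis using v by simp
  next
    case False
    hence "i - k < k" using i by auto
    hence "is_Linf M (v (i - k))" using v bounded_is_Linf[OF P] by blast
    hence "integrable M (C (v (i - k)))" using C unfolding P_operator_def by blast
    thus ?thesis using False by simp
  qed
qed

lemma dLP_nonneg:
  assumes "prob_space \<eta>1" "prob_space \<eta>2"
  shows "0 \<le> d_LP n \<eta>1 \<eta>2"
  unfolding d_LP_def
proof (rule cInf_greatest)
  have "measure \<eta>1 U \<le> measure \<eta>2 V + 1" for U V
    using prob_space.prob_le_1[OF assms(1), of U] measure_nonneg[of \<eta>2 V] by linarith
  moreover have "measure \<eta>2 U \<le> measure \<eta>1 V + 1" for U V
    using prob_space.prob_le_1[OF assms(2), of U] measure_nonneg[of \<eta>1 V] by linarith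
  ultimately show "{e. e > 0 \<and> (\<forall>U \<in> sets (Rspace n).
      measure \<eta>1 U \<le> measure \<eta>2 (nbhd n U e) + e \<and>
      measure \<eta>2 U \<le> measure \<eta>1 (nbhd n U e) + e)} \<noteq> {}" by (auto intro!: exI[where x="1::real"])
qed auto

lemma dLP_sym: "d_LP n a b = d_LP n b a"
  unfolding d_LP_def by (rule arg_cong[where f=Inf]) auto

lemma dLP_pair:
  assumes P: "prob_space M" and A: "P_operator M A" and B: "P_operator M B"
    and v: "\<forall>i<k. v i \<in> borel_measurable M \<and> (\<forall>x\<in>space M. \<bar>v i x\<bar> \<le> 1)"
  shows "d_LP (2*k) (distr M (Rspace (2*k)) (\<lambda>x. \<lambda>i\<in>{..<2*k}. if i < k then v i x else A (v (i - k)) x))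
                    (distr M (Rspace (2*k)) (\<lambda>x. \<lambda>i\<in>{..<2*k}. if i < k then v i x else B (v (i - k)) x))
         \<le> sqrt (k * op_norm M (\<lambda>v x. A v x - B v x))"
proof -
  interpret prob_space M by fact
  define \<epsilon> where "\<epsilon> = op_norm M (\<lambda>v x. A v x - B v x)"
  define XA where "XA = (\<lambda>x. \<lambda>i\<in>{..<2*k}. if i < k then v i x else A (v (i - k)) x)"
  define XB where "XB = (\<lambda>x. \<lambda>i\<in>{..<2*k}. if i < k then v i x else B (v (i - k)) x)"
  define D where "D = (\<lambda>x. \<Sum>j<k. \<bar>A (v j) x - B (v j) x\<bar>)"
  define s where "s = sqrt (k * \<epsilon>)"
  have e0: "0 \<le> \<epsilon>" unfolding \<epsilon>_def by (rule op_norm_facts(2)[OF P A B])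
  have s0: "0 \<le> s" unfolding s_def using e0 by simp
  have ss: "s * s = k * \<epsilon>" unfolding s_def using e0 by simp
  have XAm: "XA \<in> measurable M (Rspace (2*k))" unfolding XA_def by (rule XX_meas[OF P A v])
  have XBm: "XB \<in> measurable M (Rspace (2*k))" unfolding XB_def by (rule XX_meas[OF P B v])
  have vL: "is_Linf M (v j)" if "j < k" for j using v that bounded_is_Linf[OF P] by blast
  have iA: "integrable M (A (v j))" if "j < k" for j using A vL[OF that] unfolding P_operator_def by blast
  have iB: "integrable M (B (v j))" if "j < k" for j using B vL[OF that] unfolding P_operator_def by blast
  have Dint: "integrable M D" unfolding D_def
    by (intro Bochner_Integration.integrable_sum) (auto intro!: integrable_abs integrable_diff iA iB)
  have Dle: "integral\<^sup>L M D \<le> k * \<epsilon>"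
  proof -
    have "integral\<^sup>L M D = (\<Sum>j<k. L1_norm M (\<lambda>x. A (v j) x - B (v j) x))"
      unfolding D_def L1_norm_def
      by (intro Bochner_Integration.integral_sum) (auto intro!: integrable_abs integrable_diff iA iB)
    also have "\<dots> \<le> (\<Sum>j<k. \<epsilon>)"
      unfolding \<epsilon>_def using v by (intro sum_mono op_norm_bound[OF P A B]) auto
    finally show ?thesis by simp
  qed
  have D0: "\<forall>x\<in>space M. 0 \<le> D x" unfolding D_def by (auto intro: sum_nonneg)
  have ed: "\<forall>x\<in>space M. edist (2*k) (XA x) (XB x) \<le> D x"
  proof
    fix x assume "x \<in> space M"
    have "edist (2*k) (XA x) (XB x) = L2_set (\<lambda>i. XA x i - XB x i) {..<2*k}"
      unfolding edist_def L2_set_def by simp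
    also have "\<dots> \<le> (\<Sum>i<2*k. \<bar>XA x i - XB x i\<bar>)" by (rule L2_set_le_sum_abs)
    also have "\<dots> = (\<Sum>i<k+k. \<bar>XA x i - XB x i\<bar>)" by (simp add: mult_2)
    also have "\<dots> = (\<Sum>i<k. \<bar>XA x i - XB x i\<bar>) + (\<Sum>j<k. \<bar>XA x (k+j) - XB x (k+j)\<bar>)"
      by (rule sum_split_add)
    also have "(\<Sum>i<k. \<bar>XA x i - XB x i\<bar>) = 0"
      unfolding XA_def XB_def by (intro sum.neutral) auto
    also have "(\<Sum>j<k. \<bar>XA x (k+j) - XB x (k+j)\<bar>) = D x"
      unfolding XA_def XB_def D_def by (intro sum.cong) auto
    finally show "edist (2*k) (XA x) (XB x) \<le> D x" by simp
  qed
  have ed': "\<forall>x\<in>space M. edist (2*k) (XB x) (XA x) \<le> D x" using ed edist_sym by metis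
  define E where "E = {e. e > 0 \<and> (\<forall>U \<in> sets (Rspace (2*k)).
      measure (distr M (Rspace (2*k)) XA) U \<le> measure (distr M (Rspace (2*k)) XB) (nbhd (2*k) U e) + e \<and>
      measure (distr M (Rspace (2*k)) XB) U \<le> measure (distr M (Rspace (2*k)) XA) (nbhd (2*k) U e) + e)}"
  have inE: "s + \<delta> \<in> E" if d: "0 < \<delta>" for \<delta>
  proof -
    have ep: "0 < s + \<delta>" using s0 d by simp
    have "s * s \<le> (s + \<delta>) * (s + \<delta>)" using s0 d by (intro mult_mono) auto
    hence ee: "k * \<epsilon> \<le> (s + \<delta>) * (s + \<delta>)" using ss by simp
    show ?thesis unfolding E_def using ep
      lp_one_dir[OF P XAm XBm Dint ed D0 Dle ep ee]
      lp_one_dir[OF P XBm XAm Dint ed' D0 Dle ep ee] by auto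
  qed
  have "Inf E \<le> s"
  proof (rule field_le_epsilon)
    fix \<delta> :: real assume "0 < \<delta>"
    show "Inf E \<le> s + \<delta>"
      by (rule cInf_lower[OF inE[OF \<open>0 < \<delta>\<close>]]) (auto simp: E_def intro!: bdd_belowI[where m=0])
  qed
  thus ?thesis unfolding d_LP_def E_def XA_def XB_def s_def \<epsilon>_def .
qed


lemma Sk_prob:
  assumes P: "prob_space M" and C: "P_operator M C" and "\<eta> \<in> S_k M k C"
  shows "prob_space \<eta>"
proof -
  obtain v where v: "\<forall>i<k. v i \<in> borel_measurable M \<and> (\<forall>x\<in>space M. \<bar>v i x\<bar> \<le> 1)"
    and e: "\<eta> = distr M (Rspace (2*k)) (\<lambda>x. \<lambda>i\<in>{..<2*k}. if i < k then v i x else C (v (i - k)) x)"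
    using assms(3) unfolding S_k_def by blast
  show ?thesis unfolding e by (rule prob_space.prob_space_distr[OF P XX_meas[OF P C v]])
qed

lemma Sk_nonempty: "S_k M k C \<noteq> {}"
  unfolding S_k_def by (auto intro!: exI[where x="\<lambda>i x. 0"])

lemma dH_bound:
  fixes s :: real
  assumes "SA \<noteq> {}" "SB \<noteq> {}" and nn: "\<forall>x\<in>SA. \<forall>y\<in>SB. 0 \<le> d_LP n x y"
    and ab: "\<forall>x\<in>SA. \<exists>y\<in>SB. d_LP n x y \<le> s" and ba: "\<forall>y\<in>SB. \<exists>x\<in>SA. d_LP n x y \<le> s"
  shows "0 \<le> d_H n SA SB \<and> d_H n SA SB \<le> s"
proof -
  have i1: "0 \<le> (INF y\<in>SB. d_LP n x y) \<and> (INF y\<in>SB. d_LP n x y) \<le> s" if x: "x \<in> SA" for x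
  proof
    show "0 \<le> (INF y\<in>SB. d_LP n x y)" using assms(2) nn x by (intro cINF_greatest) auto
    obtain y where y: "y \<in> SB" "d_LP n x y \<le> s" using ab x by blast
    show "(INF y\<in>SB. d_LP n x y) \<le> s"
      using nn x y by (intro cINF_lower2[OF _ y(1)]) (auto intro!: bdd_belowI2[where m=0])
  qed
  have i2: "0 \<le> (INF x\<in>SA. d_LP n x y) \<and> (INF x\<in>SA. d_LP n x y) \<le> s" if y: "y \<in> SB" for y
  proof
    show "0 \<le> (INF x\<in>SA. d_LP n x y)" using assms(1) nn y by (intro cINF_greatest) auto
    obtain x where x: "x \<in> SA" "d_LP n x y \<le> s" using ba y by blast
    show "(INF x\<in>SA. d_LP n x y) \<le> s"
      using nn x y by (intro cINF_lower2[OF _ x(1)]) (auto intro!: bdd_belowI2[where m=0])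
  qed
  obtain x0 where x0: "x0 \<in> SA" using assms(1) by blast
  obtain y0 where y0: "y0 \<in> SB" using assms(2) by blast
  have S1: "0 \<le> (SUP x\<in>SA. INF y\<in>SB. d_LP n x y) \<and> (SUP x\<in>SA. INF y\<in>SB. d_LP n x y) \<le> s"
  proof
    show "(SUP x\<in>SA. INF y\<in>SB. d_LP n x y) \<le> s" using assms(1) i1 by (intro cSUP_least) auto
    show "0 \<le> (SUP x\<in>SA. INF y\<in>SB. d_LP n x y)"
      using i1 x0 by (intro cSUP_upper2[OF _ x0]) (auto intro!: bdd_aboveI2[where M=s])
  qed
  have S2: "0 \<le> (SUP y\<in>SB. INF x\<in>SA. d_LP n x y) \<and> (SUP y\<in>SB. INF x\<in>SA. d_LP n x y) \<le> s"
  proof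
    show "(SUP y\<in>SB. INF x\<in>SA. d_LP n x y) \<le> s" using assms(2) i2 by (intro cSUP_least) auto
    show "0 \<le> (SUP y\<in>SB. INF x\<in>SA. d_LP n x y)"
      using i2 y0 by (intro cSUP_upper2[OF _ y0]) (auto intro!: bdd_aboveI2[where M=s])
  qed
  show ?thesis unfolding d_H_def using S1 S2 by auto
qed

lemma dH_k:
  assumes P: "prob_space M" and A: "P_operator M A" and B: "P_operator M B"
  shows "0 \<le> d_H (2*k) (S_k M k A) (S_k M k B) \<and>
         d_H (2*k) (S_k M k A) (S_k M k B) \<le> sqrt (k * op_norm M (\<lambda>v x. A v x - B v x))"
proof (rule dH_bound[OF Sk_nonempty Sk_nonempty])
  show "\<forall>x\<in>S_k M k A. \<forall>y\<in>S_k M k B. 0 \<le> d_LP (2*k) x y"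
    using Sk_prob[OF P A] Sk_prob[OF P B] dLP_nonneg by blast
  show "\<forall>x\<in>S_k M k A. \<exists>y\<in>S_k M k B. d_LP (2*k) x y \<le> sqrt (k * op_norm M (\<lambda>v x. A v x - B v x))"
  proof
    fix x assume "x \<in> S_k M k A"
    then obtain v where v: "\<forall>i<k. v i \<in> borel_measurable M \<and> (\<forall>x\<in>space M. \<bar>v i x\<bar> \<le> 1)"
      and e: "x = distr M (Rspace (2*k)) (\<lambda>x. \<lambda>i\<in>{..<2*k}. if i < k then v i x else A (v (i - k)) x)"
      unfolding S_k_def by blast
    show "\<exists>y\<in>S_k M k B. d_LP (2*k) x y \<le> sqrt (k * op_norm M (\<lambda>v x. A v x - B v x))"
      using dLP_pair[OF P A B v] v unfolding e S_k_def by blast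
  qed
  show "\<forall>y\<in>S_k M k B. \<exists>x\<in>S_k M k A. d_LP (2*k) x y \<le> sqrt (k * op_norm M (\<lambda>v x. A v x - B v x))"
  proof
    fix y assume "y \<in> S_k M k B"
    then obtain v where v: "\<forall>i<k. v i \<in> borel_measurable M \<and> (\<forall>x\<in>space M. \<bar>v i x\<bar> \<le> 1)"
      and e: "y = distr M (Rspace (2*k)) (\<lambda>x. \<lambda>i\<in>{..<2*k}. if i < k then v i x else B (v (i - k)) x)"
      unfolding S_k_def by blast
    show "\<exists>x\<in>S_k M k A. d_LP (2*k) x y \<le> sqrt (k * op_norm M (\<lambda>v x. A v x - B v x))"
      using dLP_pair[OF P A B v] v unfolding e S_k_def by blast
  qed
qed

lemma pow_bound: "real (Suc k) \<le> (9/4) ^ k"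
proof (induction k)
  case (Suc k)
  have "real (Suc (Suc k)) \<le> 9/4 * real (Suc k)" by simp
  also have "\<dots> \<le> 9/4 * (9/4) ^ k" using Suc by simp
  finally show ?case by simp
qed simp

lemma sqrt_bound: "sqrt (real (Suc k)) \<le> (3/2) ^ k"
proof -
  have "sqrt (real (Suc k)) \<le> sqrt (((3/2) ^ k)\<^sup>2)"
    using pow_bound[of k] by (simp add: power_mult_distrib[symmetric] power_mult[symmetric] power2_eq_square power_mult_distrib)
  thus ?thesis by simp
qed

theorem lemma2p15:
  fixes M :: "'a measure" and A B :: "('a \<Rightarrow> real) \<Rightarrow> ('a \<Rightarrow> real)"
  assumes "prob_space M" and "P_operator M A" and "P_operator M B"
  shows "d_M M A B \<le> 3 * sqrt (op_norm M (\<lambda>v x. A v x - B v x))"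
proof -
  define \<epsilon> where "\<epsilon> = op_norm M (\<lambda>v x. A v x - B v x)"
  have e0: "0 \<le> \<epsilon>" unfolding \<epsilon>_def by (rule op_norm_facts(2)[OF assms])
  define f where "f = (\<lambda>k. (1/2) ^ (Suc k) * d_H (2 * Suc k) (S_k M (Suc k) A) (S_k M (Suc k) B))"
  define g where "g = (\<lambda>k. (1/2 * sqrt \<epsilon>) * (3/4::real) ^ k)"
  have fg: "0 \<le> f k \<and> f k \<le> g k" for k
  proof -
    have h: "0 \<le> d_H (2 * Suc k) (S_k M (Suc k) A) (S_k M (Suc k) B)"
        "d_H (2 * Suc k) (S_k M (Suc k) A) (S_k M (Suc k) B) \<le> sqrt (Suc k) * sqrt \<epsilon>"
      using dH_k[OF assms, of "Suc k"] unfolding \<epsilon>_def by (auto simp: real_sqrt_mult)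
    have "sqrt (Suc k) * sqrt \<epsilon> \<le> (3/2) ^ k * sqrt \<epsilon>"
      using sqrt_bound[of k] e0 by (intro mult_right_mono) auto
    hence "f k \<le> (1/2) ^ Suc k * ((3/2) ^ k * sqrt \<epsilon>)"
      unfolding f_def using h by (intro mult_left_mono) auto
    also have "\<dots> = g k" unfolding g_def by (simp add: power_mult_distrib[symmetric] field_simps)
    finally show ?thesis unfolding f_def using h by simp
  qed
  have sg: "g sums ((1/2 * sqrt \<epsilon>) * (1 / (1 - 3/4)))"
    unfolding g_def by (intro sums_mult geometric_sums) auto
  have sf: "summable f"
    using fg sg by (intro summable_comparison_test[of f g]) (auto simp: sums_summable)
  have "d_M M A B = suminf f" unfolding d_M_def f_def by simp
  also have "\<dots> \<le> suminf g" using fg sf sg by (intro suminf_le) (auto simp: sums_summable)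
  also have "suminf g = 2 * sqrt \<epsilon>" using sg sums_unique by fastforce
  also have "\<dots> \<le> 3 * sqrt \<epsilon>" using e0 by simp
  finally show ?thesis unfolding \<epsilon>_def .
qed

end
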